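(* Let $\Psi$ be a saturated root subsystem of $\Phi$, let $\Gamma$ be a gallery in $\Phi$, and let $\Delta$ be a gallery in $\Phi$ lifting $\Gamma_\Psi$. Let $p:[1,|\Gamma_\Psi|]\to[1,|\Gamma|]$ be the increasing embedding with image $I_\Psi(\Gamma)$. Then $(\Delta,\Gamma)$ is a $p$-pair whose sign and cosign are both positive.
   Context: $E$ is a finite-dimensional real Euclidean space with inner product $(\cdot,\cdot)$; $\Phi\subset E$ is a finite (reduced) root system (not necessarily spanning, not necessarily crystallographic) with reflections $\omega_\alpha$ through $L_\alpha=\alpha^\perp$. A root subsystem is a nonempty $\Psi\subset\Phi$ stable under $\omega_\alpha$, $\alpha\in\Psi$; it is saturated if $\Psi=\mathbb R\Psi\cap\Phi$. For $X\subset\Phi$, $\mathrm{Ch}_X$ is the set of connected components of $E\setminus\bigcup_{\alpha\in X}L_\alpha$; for $C\in\mathrm{Ch}_\Phi$, $C_\Psi$ is the chamber of $\mathrm{Ch}_\Psi$ containing $C$. Chambers $C,D\in\mathrm{Ch}_X$ are connected through $L_\alpha$ if $\overline C\cap\overline D\cap L_\alpha$ has nonempty interior in $L_\alpha$. A gallery in $X$ is a sequence $(C_0,L_{\alpha_1},C_1,\dots,L_{\alpha_n},C_n)$ with $C_j\in\mathrm{Ch}_X$, $\alpha_j\in X$, $C_{j-1},C_j$ connected through $L_{\alpha_j}$; its length is $n$, $C_j$ is its $j$th chamber and $(L_{\alpha_1},\dots,L_{\alpha_n})$ its sequence of walls. For a gallery $\Gamma=(C_0,L_{\alpha_1},\dots,L_{\alpha_n},C_n)$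 in $\Phi$, $I_\Psi(\Gamma)=\{i:\alpha_i\in\Psi\}=\{i_1<\dots<i_m\}$ and $\Gamma_\Psi=((C_0)_\Psi,L_{\alpha_{i_1}},(C_{i_1})_\Psi,\dots,L_{\alpha_{i_m}},(C_{i_m})_\Psi)$. For $C\in\mathrm{Ch}_\Phi$, $\Phi^s(C)$ is the unique simple system of $\Phi$ contained in $\Phi^+(C)=\{\alpha\in\Phi:(e,\alpha)>0\ \forall e\in C\}$; similarly $\Psi^s(D)$ for $D\in\mathrm{Ch}_\Psi$. $C\in\mathrm{Ch}_\Phi$ lifts $D\in\mathrm{Ch}_\Psi$ if $\Psi^s(D)\subset\Phi^s(C)$; a gallery in $\Phi$ lifts a gallery in $\Psi$ if they have the same sequence of walls and each $j$th chamber of the first lifts the $j$th chamber of the second. Given galleries $\Gamma=(C_0,L_{\alpha_1},\dots,L_{\alpha_n},C_n)$ and $\Delta=(D_0,L_{\beta_1},\dots,L_{\beta_m},D_m)$ in $\Phi$ and an increasing embedding $p:[1,m]\to[1,n]$, $(\Delta,\Gamma)$ is a $p$-pair if $L_{\alpha_{p(i)}}=L_{\beta_i}$ for all $i$. Its sign $(\epsilon_i)$ has $\epsilon_i=1$ if $L_{\beta_i}$ does not separate $D_i$ and $C_{p(i)}$ (i.e. they lie in the same open half-space of $L_{\beta_i}$) and $\epsilon_i=-1$ otherwise; its cosign $(\mu_i)$ has $\mu_i=1$ if $L_{\beta_i}$ does not separate $D_{i-1}$ and $C_{p(i)-1}$ and $\mu_i=-1$ otherwise. A sign or cosign is positive if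 all entries equal $1$. *)

theory Defs
  imports "HOL-Analysis.Analysis"
begin

definition hyp :: "'a::euclidean_space \<Rightarrow> 'a set" where
  "hyp \<alpha> = {x. inner x \<alpha> = 0}"

definition refl :: "'a::euclidean_space \<Rightarrow> 'a \<Rightarrow> 'a" where
  "refl \<alpha> x = x - (2 * inner x \<alpha> / inner \<alpha> \<alpha>) *\<^sub>R \<alpha>"

text \<open>Finite reduced root system (not necessarily spanning or crystallographic).\<close>
definition root_system :: "'a::euclidean_space set \<Rightarrow> bool" where
  "root_system \<Phi> \<longleftrightarrow> finite \<Phi> \<and> 0 \<notin> \<Phi> \<and>
     (\<forall>\<alpha>\<in>\<Phi>. \<forall>\<beta>\<in>\<Phi>. refl \<alpha> \<beta> \<in> \<Phi>) \<and>
     (\<forall>\<alpha>\<in>\<Phi>. \<forall>c::real. c *\<^sub>R \<alpha> \<in> \<Phi> \<longrightarrow> c = 1 \<or> c = -1)"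

definition root_subsystem :: "'a::euclidean_space set \<Rightarrow> 'a set \<Rightarrow> bool" where
  "root_subsystem \<Phi> \<Psi> \<longleftrightarrow> \<Psi> \<noteq> {} \<and> \<Psi> \<subseteq> \<Phi> \<and> (\<forall>\<alpha>\<in>\<Psi>. \<forall>\<beta>\<in>\<Psi>. refl \<alpha> \<beta> \<in> \<Psi>)"

definition saturated :: "'a::euclidean_space set \<Rightarrow> 'a set \<Rightarrow> bool" where
  "saturated \<Phi> \<Psi> \<longleftrightarrow> \<Psi> = span \<Psi> \<inter> \<Phi>"

definition chambers :: "'a::euclidean_space set \<Rightarrow> 'a set set" where
  "chambers X = components (UNIV - (\<Union>\<alpha>\<in>X. hyp \<alpha>))"

definition subch :: "'a::euclidean_space set \<Rightarrow> 'a set \<Rightarrow> 'a set" where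
  "subch \<Psi> C = (THE D. D \<in> chambers \<Psi> \<and> C \<subseteq> D)"

definition connected_through :: "'a::euclidean_space set \<Rightarrow> 'a set \<Rightarrow> 'a \<Rightarrow> bool" where
  "connected_through C D \<alpha> \<longleftrightarrow>
     (\<exists>U. openin (top_of_set (hyp \<alpha>)) U \<and> U \<noteq> {} \<and> U \<subseteq> closure C \<inter> closure D \<inter> hyp \<alpha>)"

definition pos_sys :: "'a::euclidean_space set \<Rightarrow> 'a set \<Rightarrow> 'a set" where
  "pos_sys \<Phi> C = {\<alpha>\<in>\<Phi>. \<forall>e\<in>C. inner e \<alpha> > 0}"

definition simple_system :: "'a::euclidean_space set \<Rightarrow> 'a set \<Rightarrow> bool" where
  "simple_system \<Phi> S \<longleftrightarrow> S \<subseteq> \<Phi> \<and> independent S \<and>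
     (\<forall>\<alpha>\<in>\<Phi>. \<exists>c. \<alpha> = (\<Sum>s\<in>S. c s *\<^sub>R s) \<and> ((\<forall>s\<in>S. c s \<ge> 0) \<or> (\<forall>s\<in>S. c s \<le> 0)))"

definition simple_of :: "'a::euclidean_space set \<Rightarrow> 'a set \<Rightarrow> 'a set" where
  "simple_of \<Phi> C = (THE S. simple_system \<Phi> S \<and> S \<subseteq> pos_sys \<Phi> C)"

definition lifts :: "'a::euclidean_space set \<Rightarrow> 'a set \<Rightarrow> 'a set \<Rightarrow> 'a set \<Rightarrow> bool" where
  "lifts \<Phi> \<Psi> C D \<longleftrightarrow> C \<in> chambers \<Phi> \<and> D \<in> chambers \<Psi> \<and> simple_of \<Psi> D \<subseteq> simple_of \<Phi> C"

text \<open>A gallery \<open>(C_0, L_{\<alpha>_1}, C_1, \<dots>, L_{\<alpha>_n}, C_n)\<close> is represented as the pair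
  \<open>([C_0,\<dots>,C_n], [\<alpha>_1,\<dots>,\<alpha>_n])\<close>; so \<open>C_j = fst \<Gamma> ! j\<close> and \<open>\<alpha>_j = snd \<Gamma> ! (j-1)\<close>.\<close>
type_synonym 'a gallery = "'a set list \<times> 'a list"

definition glen :: "'a gallery \<Rightarrow> nat" where
  "glen \<Gamma> = length (snd \<Gamma>)"

definition gch :: "'a gallery \<Rightarrow> nat \<Rightarrow> 'a set" where
  "gch \<Gamma> j = fst \<Gamma> ! j"

definition groot :: "'a gallery \<Rightarrow> nat \<Rightarrow> 'a" where
  "groot \<Gamma> j = snd \<Gamma> ! (j - 1)"

definition gallery :: "'a::euclidean_space set \<Rightarrow> 'a gallery \<Rightarrow> bool" where
  "gallery X \<Gamma> \<longleftrightarrow> length (fst \<Gamma>) = Suc (glen \<Gamma>) \<and>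
     (\<forall>j\<le>glen \<Gamma>. gch \<Gamma> j \<in> chambers X) \<and>
     (\<forall>j\<in>{1..glen \<Gamma>}. groot \<Gamma> j \<in> X \<and> connected_through (gch \<Gamma> (j-1)) (gch \<Gamma> j) (groot \<Gamma> j))"

definition walls :: "'a::euclidean_space gallery \<Rightarrow> 'a set list" where
  "walls \<Gamma> = map hyp (snd \<Gamma>)"

definition idx_list :: "'a set \<Rightarrow> 'a gallery \<Rightarrow> nat list" where
  "idx_list \<Psi> \<Gamma> = filter (\<lambda>i. groot \<Gamma> i \<in> \<Psi>) [1..<Suc (glen \<Gamma>)]"

definition I_idx :: "'a set \<Rightarrow> 'a gallery \<Rightarrow> nat set" where
  "I_idx \<Psi> \<Gamma> = {i\<in>{1..glen \<Gamma>}. groot \<Gamma> i \<in> \<Psi>}"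

definition restrict_gal :: "'a::euclidean_space set \<Rightarrow> 'a gallery \<Rightarrow> 'a gallery" where
  "restrict_gal \<Psi> \<Gamma> =
     (map (\<lambda>i. subch \<Psi> (gch \<Gamma> i)) (0 # idx_list \<Psi> \<Gamma>),
      map (\<lambda>i. groot \<Gamma> i) (idx_list \<Psi> \<Gamma>))"

definition gallery_lifts :: "'a::euclidean_space set \<Rightarrow> 'a set \<Rightarrow> 'a gallery \<Rightarrow> 'a gallery \<Rightarrow> bool" where
  "gallery_lifts \<Phi> \<Psi> \<Delta> \<Gamma>' \<longleftrightarrow> walls \<Delta> = walls \<Gamma>' \<and>
     (\<forall>j\<le>glen \<Delta>. lifts \<Phi> \<Psi> (gch \<Delta> j) (gch \<Gamma>' j))"

definition p_pair :: "'a::euclidean_space gallery \<Rightarrow> 'a gallery \<Rightarrow> (nat \<Rightarrow> nat) \<Rightarrow> bool" where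
  "p_pair \<Delta> \<Gamma> p \<longleftrightarrow> p ` {1..glen \<Delta>} \<subseteq> {1..glen \<Gamma>} \<and> strict_mono_on {1..glen \<Delta>} p \<and>
     (\<forall>i\<in>{1..glen \<Delta>}. hyp (groot \<Gamma> (p i)) = hyp (groot \<Delta> i))"

definition same_side :: "'a::euclidean_space \<Rightarrow> 'a set \<Rightarrow> 'a set \<Rightarrow> bool" where
  "same_side \<beta> A B \<longleftrightarrow>
     (A \<subseteq> {x. inner x \<beta> > 0} \<and> B \<subseteq> {x. inner x \<beta> > 0}) \<or>
     (A \<subseteq> {x. inner x \<beta> < 0} \<and> B \<subseteq> {x. inner x \<beta> < 0})"

definition pair_sign :: "'a::euclidean_space gallery \<Rightarrow> 'a gallery \<Rightarrow> (nat \<Rightarrow> nat) \<Rightarrow> nat \<Rightarrow> int" where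
  "pair_sign \<Delta> \<Gamma> p i = (if same_side (groot \<Delta> i) (gch \<Delta> i) (gch \<Gamma> (p i)) then 1 else -1)"

definition pair_cosign :: "'a::euclidean_space gallery \<Rightarrow> 'a gallery \<Rightarrow> (nat \<Rightarrow> nat) \<Rightarrow> nat \<Rightarrow> int" where
  "pair_cosign \<Delta> \<Gamma> p i = (if same_side (groot \<Delta> i) (gch \<Delta> (i-1)) (gch \<Gamma> (p i - 1)) then 1 else -1)"

end

theory Submission
  imports Defs
begin

abbreviation UX :: "'a::euclidean_space set \<Rightarrow> 'a set" where
  "UX X \<equiv> UNIV - (\<Union>\<alpha>\<in>X. hyp \<alpha>)"

lemma chamber_basic:
  assumes "C \<in> chambers X"
  shows "C \<noteq> {}" "connected C" "C \<subseteq> UX X"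
  using assms unfolding chambers_def
  by (auto dest: in_components_nonempty in_components_connected in_components_subset)

lemma chamber_avoid:
  assumes "C \<in> chambers X" "\<alpha> \<in> X" "x \<in> C"
  shows "inner x \<alpha> \<noteq> 0"
  using chamber_basic(3)[OF assms(1)] assms(2,3) unfolding hyp_def by auto

lemma sign_const:
  fixes b :: "'a::euclidean_space"
  assumes "connected C" "\<forall>x\<in>C. inner x b \<noteq> 0"
  shows "C \<subseteq> {x. inner x b > 0} \<or> C \<subseteq> {x. inner x b < 0}"
proof (rule ccontr)
  assume "\<not> ?thesis"
  then obtain x y where xy: "x \<in> C" "y \<in> C" "inner x b \<le> 0" "inner y b \<ge> 0" by force
  then have "inner b x \<le> 0" "0 \<le> inner b y" by (auto simp: inner_commute)
  from connected_ivt_hyperplane[OF assms(1) xy(1,2) this] obtain z where "z \<in> C" "inner b z = 0" by blast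
  with assms(2) show False by (metis inner_commute)
qed

lemma chamber_cc:
  assumes "C \<in> chambers X" "x \<in> C"
  shows "C = connected_component_set (UX X) x"
proof -
  from assms(1) obtain y where "C = connected_component_set (UX X) y"
    unfolding chambers_def components_iff by blast
  with assms(2) show ?thesis by (metis connected_component_eq mem_Collect_eq)
qed

lemma subch_props:
  assumes "\<Psi> \<subseteq> \<Phi>" "C \<in> chambers \<Phi>"
  shows "subch \<Psi> C \<in> chambers \<Psi> \<and> C \<subseteq> subch \<Psi> C"
proof -
  obtain x where x: "x \<in> C" using chamber_basic(1)[OF assms(2)] by blast
  have sub: "C \<subseteq> UX \<Psi>" using chamber_basic(3)[OF assms(2)] assms(1) by blast
  let ?D = "connected_component_set (UX \<Psi>) x"
  have D: "?D \<in> chambers \<Psi>" unfolding chambers_def components_iff using x sub by blast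
  have CD: "C \<subseteq> ?D"
    by (rule connected_component_maximal[OF x chamber_basic(2)[OF assms(2)] sub])
  have "subch \<Psi> C = ?D"
    unfolding subch_def
  proof (rule the_equality)
    show "?D \<in> chambers \<Psi> \<and> C \<subseteq> ?D" using D CD by blast
    fix E assume "E \<in> chambers \<Psi> \<and> C \<subseteq> E"
    then show "E = ?D" using chamber_cc x by blast
  qed
  then show ?thesis using D CD by simp
qed

definition K :: "'a::euclidean_space set \<Rightarrow> 'a set" where
  "K T = {x. \<exists>c. (\<forall>s\<in>T. c s \<ge> 0) \<and> x = (\<Sum>s\<in>T. c s *\<^sub>R s)}"

lemma K_zero: "0 \<in> K T"
  unfolding K_def by (rule CollectI, rule exI[of _ "\<lambda>_. 0"]) simp

lemma K_add: assumes "x \<in> K T" "y \<in> K T" shows "x + y \<in> K T"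
proof -
  from assms obtain c d where c: "\<forall>s\<in>T. c s \<ge> 0" "x = (\<Sum>s\<in>T. c s *\<^sub>R s)"
    and d: "\<forall>s\<in>T. d s \<ge> 0" "y = (\<Sum>s\<in>T. d s *\<^sub>R s)" unfolding K_def by blast
  show ?thesis unfolding K_def
    by (rule CollectI, rule exI[of _ "\<lambda>s. c s + d s"])
       (simp add: c d scaleR_add_left sum.distrib add_nonneg_nonneg)
qed

lemma K_scale: assumes "x \<in> K T" "a \<ge> 0" shows "a *\<^sub>R x \<in> K T"
proof -
  from assms obtain c where c: "\<forall>s\<in>T. c s \<ge> 0" "x = (\<Sum>s\<in>T. c s *\<^sub>R s)" unfolding K_def by blast
  show ?thesis unfolding K_def
    by (rule CollectI, rule exI[of _ "\<lambda>s. a * c s"])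
       (simp add: c assms scaleR_sum_right)
qed

lemma K_mem: assumes "finite T" "t \<in> T" shows "t \<in> K T"
proof -
  have "(\<Sum>s\<in>T. (if s = t then 1 else 0) *\<^sub>R s) = t"
    using assms by (simp add: if_distrib[of "\<lambda>x. x *\<^sub>R _"] sum.delta cong: if_cong)
  then show ?thesis unfolding K_def
    by (intro CollectI exI[of _ "\<lambda>s. if s = t then 1 else 0"]) auto
qed

lemma K_sum:
  assumes "finite A" "\<forall>a\<in>A. f a \<in> K T" "\<forall>a\<in>A. c a \<ge> 0"
  shows "(\<Sum>a\<in>A. c a *\<^sub>R f a) \<in> K T"
  using assms by (induction A rule: finite_induct) (auto intro: K_zero K_add K_scale)

lemma K_trans:
  assumes "finite S" "S \<subseteq> K T"
  shows "K S \<subseteq> K T"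
proof
  fix x assume "x \<in> K S"
  then obtain c where c: "\<forall>s\<in>S. c s \<ge> 0" "x = (\<Sum>s\<in>S. c s *\<^sub>R s)" unfolding K_def by blast
  show "x \<in> K T" unfolding c(2) using K_sum[of S "\<lambda>s. s" T c] assms c(1) by auto
qed

lemma rs_neg:
  assumes "root_system R" "\<alpha> \<in> R" shows "- \<alpha> \<in> R"
proof -
  have "\<alpha> \<noteq> 0" using assms unfolding root_system_def by auto
  then have "refl \<alpha> \<alpha> = - \<alpha>" unfolding refl_def by (simp add: algebra_simps scaleR_2)
  then show ?thesis using assms unfolding root_system_def by metis
qed

lemma rs_reduced:
  assumes "root_system R" "\<alpha> \<in> R" "c *\<^sub>R \<alpha> \<in> R" shows "c = 1 \<or> c = -1"
  using assms unfolding root_system_def by blast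

lemma rs_nz: assumes "root_system R" "\<alpha> \<in> R" shows "\<alpha> \<noteq> 0"
  using assms unfolding root_system_def by auto

lemma pos_or_neg:
  assumes "root_system R" "C \<in> chambers R" "\<alpha> \<in> R"
  shows "\<alpha> \<in> pos_sys R C \<or> - \<alpha> \<in> pos_sys R C"
proof -
  have "\<forall>x\<in>C. inner x \<alpha> \<noteq> 0" using chamber_avoid assms(2,3) by blast
  from sign_const[OF chamber_basic(2)[OF assms(2)] this]
  show ?thesis using rs_neg[OF assms(1,3)] assms(3) unfolding pos_sys_def by auto
qed

lemma obtuse_indep:
  fixes S :: "'a::euclidean_space set"
  assumes fin: "finite S" and pos: "\<forall>s\<in>S. inner e s > 0"
    and obt: "\<forall>a\<in>S. \<forall>b\<in>S. a \<noteq> b \<longrightarrow> inner a b \<le> 0"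
  shows "independent S"
proof
  assume "dependent S"
  then obtain u where u: "\<exists>v\<in>S. u v \<noteq> 0" "(\<Sum>v\<in>S. u v *\<^sub>R v) = 0"
    using dependent_finite[OF fin] by blast
  define P where "P = {v\<in>S. u v > 0}"
  define N where "N = {v\<in>S. u v < 0}"
  have finP: "finite P" and finN: "finite N" using fin by (auto simp: P_def N_def)
  have "(\<Sum>v\<in>S. u v *\<^sub>R v) = (\<Sum>v\<in>P. u v *\<^sub>R v) + (\<Sum>v\<in>S - P. u v *\<^sub>R v)"
    using fin by (metis (no_types, lifting) P_def mem_Collect_eq subsetI sum.subset_diff add.commute)
  also have "(\<Sum>v\<in>S - P. u v *\<^sub>R v) = (\<Sum>v\<in>N. u v *\<^sub>R v)"
    by (rule sum.mono_neutral_right) (auto simp: fin P_def N_def)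
  finally have eq: "(\<Sum>v\<in>P. u v *\<^sub>R v) = (\<Sum>v\<in>N. (- u v) *\<^sub>R v)"
    using u(2) by (simp add: sum_negf eq_neg_iff_add_eq_0)
  define \<sigma> where "\<sigma> = (\<Sum>v\<in>P. u v *\<^sub>R v)"
  have "inner \<sigma> \<sigma> = inner (\<Sum>v\<in>P. u v *\<^sub>R v) (\<Sum>v\<in>N. (- u v) *\<^sub>R v)"
    using eq \<sigma>_def by simp
  also have "\<dots> = (\<Sum>a\<in>P. \<Sum>b\<in>N. (u a * (- u b)) * inner a b)"
    by (simp add: inner_sum_left inner_sum_right sum_distrib_left mult.assoc sum_negf)
       (subst sum.swap, simp add: mult.left_commute)
  also have "\<dots> \<le> 0"
  proof (intro sum_nonpos)
    fix a b assume "a \<in> P" "b \<in> N"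
    then have "a \<noteq> b" "a \<in> S" "b \<in> S" "u a > 0" "u b < 0" by (auto simp: P_def N_def)
    then show "(u a * (- u b)) * inner a b \<le> 0"
    proof -
      have "inner a b \<le> 0" using obt \<open>a \<noteq> b\<close> \<open>a \<in> S\<close> \<open>b \<in> S\<close> by blast
      moreover have "u a * (- u b) \<ge> 0" using \<open>u a > 0\<close> \<open>u b < 0\<close> by (simp add: mult_pos_neg less_imp_le)
      ultimately show ?thesis using mult_nonneg_nonpos by blast
    qed
  qed
  finally have s0: "\<sigma> = 0" using inner_gt_zero_iff[of \<sigma>] by linarith
  have "P = {}"
  proof (rule ccontr)
    assume "P \<noteq> {}"
    have "inner e \<sigma> = (\<Sum>v\<in>P. u v * inner e v)" by (simp add: \<sigma>_def inner_sum_right)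
    also have "\<dots> > 0" using \<open>P \<noteq> {}\<close> finP pos by (intro sum_pos) (auto simp: P_def)
    finally show False using s0 by simp
  qed
  moreover have "N = {}"
  proof (rule ccontr)
    assume "N \<noteq> {}"
    have "inner e \<sigma> = (\<Sum>v\<in>N. (- u v) * inner e v)" by (simp add: \<sigma>_def eq inner_sum_right)
    also have "\<dots> > 0" using \<open>N \<noteq> {}\<close> finN pos by (intro sum_pos) (auto simp: N_def mult_neg_pos)
    finally show False using s0 by simp
  qed
  ultimately show False using u(1) by (auto simp: P_def N_def) (metis linorder_neqE_linordered_idom)
qed

lemma simple_exists:
  fixes R :: "'a::euclidean_space set"
  assumes rs: "root_system R" and C: "C \<in> chambers R"
  shows "\<exists>S. simple_system R S \<and> S \<subseteq> pos_sys R C"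
proof -
  let ?P = "pos_sys R C"
  obtain e where e: "e \<in> C" using chamber_basic(1)[OF C] by blast
  have epos: "\<And>\<alpha>. \<alpha> \<in> ?P \<Longrightarrow> inner e \<alpha> > 0" using e unfolding pos_sys_def by auto
  have finR: "finite R" using rs unfolding root_system_def by blast
  have finP: "finite ?P" using finR unfolding pos_sys_def by simp
  have PR: "?P \<subseteq> R" unfolding pos_sys_def by auto
  define F where "F T \<longleftrightarrow> T \<subseteq> ?P \<and> ?P \<subseteq> K T" for T
  have "F ?P" unfolding F_def using K_mem[OF finP] by blast
  from ex_has_least_nat[of F, OF this, where m=card]
  obtain S where FS: "F S" and min: "\<And>T. F T \<Longrightarrow> card S \<le> card T" by blast
  have SP: "S \<subseteq> ?P" and PK: "?P \<subseteq> K S" using FS unfolding F_def by auto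
  have finS: "finite S" using SP finP finite_subset by blast
  have remove: "s0 \<notin> K (S - {s0})" if "s0 \<in> S" for s0
  proof
    assume a: "s0 \<in> K (S - {s0})"
    have "S \<subseteq> K (S - {s0})"
    proof
      fix s assume "s \<in> S"
      then show "s \<in> K (S - {s0})" using a K_mem[of "S - {s0}" s] finS by (cases "s = s0") auto
    qed
    then have "K S \<subseteq> K (S - {s0})" using K_trans finS by blast
    then have "F (S - {s0})" using SP PK unfolding F_def by blast
    then have "card S \<le> card (S - {s0})" by (rule min)
    moreover have "card (S - {s0}) < card S" using that finS by (meson card_Diff1_less)
    ultimately show False by simp
  qed
  have H: False if s0S: "s0 \<in> S" and apos: "a > 0" and eq: "a *\<^sub>R s0 = v + (\<Sum>s\<in>S. d s *\<^sub>R s)"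
    and vK: "v \<in> K (S - {s0})" and dnn: "\<forall>s\<in>S. d s \<ge> 0" and dlt: "d s0 < a" for s0 a v d
  proof -
    have "(\<Sum>s\<in>S. d s *\<^sub>R s) = d s0 *\<^sub>R s0 + (\<Sum>s\<in>S - {s0}. d s *\<^sub>R s)"
      using s0S finS by (simp add: sum.remove)
    then have "(a - d s0) *\<^sub>R s0 = v + (\<Sum>s\<in>S - {s0}. d s *\<^sub>R s)"
      using eq by (simp add: algebra_simps)
    moreover have "(\<Sum>s\<in>S - {s0}. d s *\<^sub>R s) \<in> K (S - {s0})"
      unfolding K_def using dnn by auto
    ultimately have sK: "(a - d s0) *\<^sub>R s0 \<in> K (S - {s0})" using vK K_add by metis
    have "s0 \<in> K (S - {s0})" using K_scale[OF sK, of "1/(a - d s0)"] dlt by simp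
    then show False using remove s0S by blast
  qed
  have obtuse: "inner \<alpha> \<beta> \<le> 0" if aS: "\<alpha> \<in> S" and bS: "\<beta> \<in> S" and ne: "\<alpha> \<noteq> \<beta>" for \<alpha> \<beta>
  proof (rule ccontr)
    assume "\<not> inner \<alpha> \<beta> \<le> 0"
    then have ab: "inner \<alpha> \<beta> > 0" by simp
    have aR: "\<alpha> \<in> R" and bR: "\<beta> \<in> R" using aS bS SP PR by auto
    have "\<alpha> \<noteq> 0" using rs_nz[OF rs aR] .
    then have aa: "inner \<alpha> \<alpha> > 0" by simp
    define c where "c = 2 * inner \<beta> \<alpha> / inner \<alpha> \<alpha>"
    have cpos: "c > 0" unfolding c_def using ab aa by (simp add: inner_commute)
    define \<gamma> where "\<gamma> = \<beta> - c *\<^sub>R \<alpha>"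
    have gR: "\<gamma> \<in> R" using rs aR bR unfolding root_system_def refl_def \<gamma>_def c_def by blast
    have ea: "inner e \<alpha> > 0" and eb: "inner e \<beta> > 0" using epos aS bS SP by auto
    have aK: "\<alpha> \<in> K (S - {\<beta>})" using K_mem[of "S - {\<beta>}" \<alpha>] finS aS ne by auto
    have bK: "\<beta> \<in> K (S - {\<alpha>})" using K_mem[of "S - {\<alpha>}" \<beta>] finS bS ne by auto
    have sumge: "inner e (\<Sum>s\<in>S. d s *\<^sub>R s) \<ge> d t * inner e t"
      if "t \<in> S" "\<forall>s\<in>S. d s \<ge> 0" for t d
    proof -
      have "inner e (\<Sum>s\<in>S. d s *\<^sub>R s) = (\<Sum>s\<in>S. d s * inner e s)" by (simp add: inner_sum_right)
      also have "\<dots> \<ge> d t * inner e t"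
      proof (rule member_le_sum)
        fix x assume "x \<in> S - {t}"
        then have "d x \<ge> 0" "inner e x > 0" using that epos SP by auto
        then show "0 \<le> d x * inner e x" by simp
      qed (use that finS in auto)
      finally show ?thesis .
    qed
    from pos_or_neg[OF rs C gR] show False
    proof
      assume "\<gamma> \<in> ?P"
      then have "\<gamma> \<in> K S" using PK by blast
      then obtain d where d: "\<forall>s\<in>S. d s \<ge> 0" "\<gamma> = (\<Sum>s\<in>S. d s *\<^sub>R s)" unfolding K_def by blast
      show False
      proof (cases "d \<beta> < 1")
        case True
        have "1 *\<^sub>R \<beta> = c *\<^sub>R \<alpha> + (\<Sum>s\<in>S. d s *\<^sub>R s)" using d(2) \<gamma>_def by (simp add: algebra_simps)
        then show False using H[OF bS _ _ _ d(1) True, of "c *\<^sub>R \<alpha>"] K_scale[OF aK] cpos by auto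
      next
        case False
        have "inner e \<gamma> \<ge> d \<beta> * inner e \<beta>" using sumge[OF bS d(1)] d(2) by simp
        moreover have "d \<beta> * inner e \<beta> \<ge> inner e \<beta>" using False eb by simp
        moreover have "inner e \<gamma> = inner e \<beta> - c * inner e \<alpha>" unfolding \<gamma>_def by (simp add: inner_diff_right)
        moreover have "c * inner e \<alpha> > 0" using cpos ea by simp
        ultimately show False by linarith
      qed
    next
      assume "- \<gamma> \<in> ?P"
      then have "- \<gamma> \<in> K S" using PK by blast
      then obtain d where d: "\<forall>s\<in>S. d s \<ge> 0" "- \<gamma> = (\<Sum>s\<in>S. d s *\<^sub>R s)" unfolding K_def by blast
      show False
      proof (cases "d \<alpha> < c")
        case True
        have "c *\<^sub>R \<alpha> = \<beta> + (\<Sum>s\<in>S. d s *\<^sub>R s)" using d(2) \<gamma>_def by (simp add: algebra_simps)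
        then show False using H[OF aS cpos _ bK d(1) True] by auto
      next
        case False
        have "inner e (- \<gamma>) \<ge> d \<alpha> * inner e \<alpha>" using sumge[OF aS d(1)] d(2) by simp
        moreover have "d \<alpha> * inner e \<alpha> \<ge> c * inner e \<alpha>" using False ea by simp
        moreover have "inner e (- \<gamma>) = c * inner e \<alpha> - inner e \<beta>" unfolding \<gamma>_def by (simp add: inner_diff_right)
        ultimately show False using eb by linarith
      qed
    qed
  qed
  have indep: "independent S"
    using obtuse_indep[OF finS, of e] epos SP obtuse by blast
  have coeff: "\<exists>c. \<alpha> = (\<Sum>s\<in>S. c s *\<^sub>R s) \<and> ((\<forall>s\<in>S. c s \<ge> 0) \<or> (\<forall>s\<in>S. c s \<le> 0))"
    if "\<alpha> \<in> R" for \<alpha>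
    using pos_or_neg[OF rs C that]
  proof
    assume "\<alpha> \<in> ?P"
    then show ?thesis using PK unfolding K_def by blast
  next
    assume "- \<alpha> \<in> ?P"
    then obtain c where c: "\<forall>s\<in>S. c s \<ge> 0" "- \<alpha> = (\<Sum>s\<in>S. c s *\<^sub>R s)" using PK unfolding K_def by blast
    then have "\<alpha> = (\<Sum>s\<in>S. (- c s) *\<^sub>R s)" by (simp add: sum_negf) (metis minus_minus)
    then show ?thesis using c(1) by (intro exI[of _ "\<lambda>s. - c s"]) auto
  qed
  have "simple_system R S" unfolding simple_system_def using SP PR indep coeff by blast
  then show ?thesis using SP by blast
qed

lemma pos_coeff:
  assumes ss: "simple_system R S" and SP: "S \<subseteq> pos_sys R C" and e: "e \<in> C"
    and ap: "\<alpha> \<in> pos_sys R C"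
  shows "\<exists>c. \<alpha> = (\<Sum>s\<in>S. c s *\<^sub>R s) \<and> (\<forall>s\<in>S. c s \<ge> 0)"
proof -
  have "\<alpha> \<in> R" using ap unfolding pos_sys_def by auto
  then obtain c where c: "\<alpha> = (\<Sum>s\<in>S. c s *\<^sub>R s)" "(\<forall>s\<in>S. c s \<ge> 0) \<or> (\<forall>s\<in>S. c s \<le> 0)"
    using ss unfolding simple_system_def by blast
  have ea: "inner e \<alpha> > 0" using ap e unfolding pos_sys_def by auto
  show ?thesis
  proof (cases "\<forall>s\<in>S. c s \<ge> 0")
    case True then show ?thesis using c by blast
  next
    case False
    then have neg: "\<forall>s\<in>S. c s \<le> 0" using c(2) by blast
    have "inner e \<alpha> = (\<Sum>s\<in>S. c s * inner e s)" using c(1) by (simp add: inner_sum_right)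
    also have "\<dots> \<le> 0"
    proof (rule sum_nonpos)
      fix s assume "s \<in> S"
      then have "c s \<le> 0" "inner e s > 0" using neg SP e unfolding pos_sys_def by auto
      then show "c s * inner e s \<le> 0" by (simp add: mult_nonpos_nonneg)
    qed
    finally show ?thesis using ea by simp
  qed
qed

lemma indep_coeff:
  fixes S :: "'a::euclidean_space set"
  assumes "finite S" "independent S" "(\<Sum>t\<in>S. f t *\<^sub>R t) = (\<Sum>t\<in>S. g t *\<^sub>R t)"
  shows "\<forall>t\<in>S. f t = g t"
proof (rule ccontr)
  assume "\<not> ?thesis"
  then obtain v where v: "v \<in> S" "f v - g v \<noteq> 0" by auto
  have e1: "(\<Sum>t\<in>S. (f t - g t) *\<^sub>R t) = (\<Sum>t\<in>S. f t *\<^sub>R t) - (\<Sum>t\<in>S. g t *\<^sub>R t)"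
    unfolding scaleR_diff_left by (rule sum_subtractf)
  have e2: "(\<Sum>t\<in>S. (f t - g t) *\<^sub>R t) = 0" unfolding e1 assms(3) by (rule diff_self)
  have "dependent S" unfolding dependent_finite[OF assms(1)]
    by (rule exI[of _ "\<lambda>t. f t - g t"], rule conjI, rule bexI[OF _ v(1)], rule v(2), rule e2)
  with assms(2) show False by simp
qed

lemma simple_unique_sub:
  assumes rs: "root_system R" and S1: "simple_system R S" "S \<subseteq> pos_sys R C"
    and S2: "simple_system R S'" "S' \<subseteq> pos_sys R C" and e: "e \<in> C"
  shows "S' \<subseteq> S"
proof
  fix s' assume s'S: "s' \<in> S'"
  have finR: "finite R" using rs unfolding root_system_def by blast
  have finS': "finite S'" using S2 finR unfolding simple_system_def using finite_subset by blast
  have indS': "independent S'" using S2 unfolding simple_system_def by blast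
  have s'P: "s' \<in> pos_sys R C" using s'S S2 by blast
  then have s'R: "s' \<in> R" unfolding pos_sys_def by auto
  obtain a where a: "s' = (\<Sum>s\<in>S. a s *\<^sub>R s)" "\<forall>s\<in>S. a s \<ge> 0"
    using pos_coeff[OF S1 e s'P] by blast
  have "\<forall>s\<in>S. \<exists>bs. s = (\<Sum>t\<in>S'. bs t *\<^sub>R t) \<and> (\<forall>t\<in>S'. bs t \<ge> 0)"
    using pos_coeff[OF S2 e] S1(2) by blast
  from bchoice[OF this] obtain b where b0: "\<forall>s\<in>S. s = (\<Sum>t\<in>S'. b s t *\<^sub>R t) \<and> (\<forall>t\<in>S'. b s t \<ge> 0)"
    by blast
  have b: "s = (\<Sum>t\<in>S'. b s t *\<^sub>R t)" "\<forall>t\<in>S'. b s t \<ge> 0" if "s \<in> S" for s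
    using b0 that by blast+
  have "s' = (\<Sum>s\<in>S. a s *\<^sub>R (\<Sum>t\<in>S'. b s t *\<^sub>R t))"
    unfolding a(1)
  proof (rule sum.cong[OF refl])
    fix s assume "s \<in> S"
    show "a s *\<^sub>R s = a s *\<^sub>R (\<Sum>t\<in>S'. b s t *\<^sub>R t)"
      by (rule arg_cong[where f="\<lambda>x. a s *\<^sub>R x", OF b(1)[OF \<open>s \<in> S\<close>]])
  qed
  also have "\<dots> = (\<Sum>t\<in>S'. (\<Sum>s\<in>S. a s * b s t) *\<^sub>R t)"
    unfolding scaleR_sum_right scaleR_sum_left scaleR_scaleR by (rule sum.swap)
  finally have chain: "s' = (\<Sum>t\<in>S'. (\<Sum>s\<in>S. a s * b s t) *\<^sub>R t)" .
  have delta: "(\<Sum>t\<in>S'. (if t = s' then 1 else 0) *\<^sub>R t) = s'"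
    using s'S finS' by (simp add: if_distrib[of "\<lambda>x. x *\<^sub>R _"] sum.delta cong: if_cong)
  have eq1: "(\<Sum>t\<in>S'. (\<Sum>s\<in>S. a s * b s t) *\<^sub>R t) = (\<Sum>t\<in>S'. (if t = s' then 1 else 0) *\<^sub>R t)"
    by (simp only: delta chain[symmetric])
  have coeff: "\<forall>t\<in>S'. (\<Sum>s\<in>S. a s * b s t) = (if t = s' then 1 else 0)"
    by (rule indep_coeff[OF finS' indS' eq1])
  have finS: "finite S" using S1 finR unfolding simple_system_def using finite_subset by blast
  obtain s0 where s0: "s0 \<in> S" "a s0 > 0"
  proof (rule ccontr)
    assume "\<not> thesis"
    have "\<forall>s\<in>S. a s = 0"
    proof
      fix s assume sS: "s \<in> S"
      then have "\<not> a s > 0" using that \<open>\<not> thesis\<close> by blast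
      moreover have "a s \<ge> 0" using a(2) sS by blast
      ultimately show "a s = 0" by linarith
    qed
    then have "s' = 0" using a(1) by simp
    then show False using rs_nz[OF rs s'R] by simp
  qed
  have bz: "b s0 t = 0" if "t \<in> S'" "t \<noteq> s'" for t
  proof -
    have "(\<Sum>s\<in>S. a s * b s t) = 0" using coeff that by simp
    moreover have "\<forall>s\<in>S. a s * b s t \<ge> 0" using a(2) b(2) that by simp
    ultimately have "\<forall>s\<in>S. a s * b s t = 0" by (simp add: sum_nonneg_eq_0_iff[OF finS])
    then have "a s0 * b s0 t = 0" using s0(1) by blast
    then show ?thesis using s0(2) by simp
  qed
  define k where "k = b s0 s'"
  have "s0 = (\<Sum>t\<in>S'. b s0 t *\<^sub>R t)" using b(1) s0(1) by blast
  also have "\<dots> = b s0 s' *\<^sub>R s' + (\<Sum>t\<in>S' - {s'}. b s0 t *\<^sub>R t)"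
    using s'S finS' by (simp add: sum.remove)
  also have "(\<Sum>t\<in>S' - {s'}. b s0 t *\<^sub>R t) = 0" using bz by (intro sum.neutral) auto
  finally have s0eq: "s0 = k *\<^sub>R s'" unfolding k_def by simp
  have s0R: "s0 \<in> R" using s0(1) S1 unfolding simple_system_def by blast
  have "k *\<^sub>R s' \<in> R" using s0R s0eq by simp
  then have "k = 1 \<or> k = -1" using rs_reduced[OF rs s'R] by blast
  moreover have "k \<noteq> -1"
  proof
    assume "k = -1"
    then have "s0 = - s'" using s0eq by simp
    moreover have "inner e s0 > 0" "inner e s' > 0" using s0(1) S1(2) s'P e unfolding pos_sys_def by auto
    ultimately show False by simp
  qed
  ultimately have "s0 = s'" using s0eq by simp
  then show "s' \<in> S" using s0(1) by simp
qed

lemma simple_of_props: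
  assumes rs: "root_system R" and C: "C \<in> chambers R"
  shows "simple_system R (simple_of R C) \<and> simple_of R C \<subseteq> pos_sys R C"
proof -
  obtain S where S: "simple_system R S \<and> S \<subseteq> pos_sys R C" using simple_exists[OF rs C] by blast
  obtain e where e: "e \<in> C" using chamber_basic(1)[OF C] by blast
  have "\<exists>!S. simple_system R S \<and> S \<subseteq> pos_sys R C"
  proof (rule ex1I[of "\<lambda>S. simple_system R S \<and> S \<subseteq> pos_sys R C" S, OF S])
    fix S' assume "simple_system R S' \<and> S' \<subseteq> pos_sys R C"
    then show "S' = S" using simple_unique_sub[OF rs _ _ _ _ e] S by (meson subset_antisym)
  qed
  then show ?thesis unfolding simple_of_def by (rule theI')
qed


lemma conv_pos:
  fixes a b u :: real
  assumes "a > 0" "b > 0" "0 \<le> u" "u \<le> 1"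
  shows "(1 - u) * a + u * b > 0"
proof (cases "u = 1")
  case True then show ?thesis using assms by simp
next
  case False
  then have "(1 - u) * a > 0" using assms by simp
  moreover have "u * b \<ge> 0" using assms by simp
  ultimately show ?thesis by linarith
qed

lemma sub_rs:
  assumes "root_system \<Phi>" "root_subsystem \<Phi> \<Psi>"
  shows "root_system \<Psi>"
  using assms unfolding root_system_def root_subsystem_def
  by (meson finite_subset subsetD)

lemma lift_sub:
  assumes rs: "root_system \<Phi>" and sub: "root_subsystem \<Phi> \<Psi>"
    and D: "D \<in> chambers \<Phi>" and C': "C' \<in> chambers \<Psi>"
    and SS: "simple_of \<Psi> C' \<subseteq> simple_of \<Phi> D"
  shows "D \<subseteq> C'"
proof
  fix x assume xD: "x \<in> D"
  have rsP: "root_system \<Psi>" using sub_rs[OF rs sub] .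
  have PsiPhi: "\<Psi> \<subseteq> \<Phi>" using sub unfolding root_subsystem_def by blast
  obtain y where yC: "y \<in> C'" using chamber_basic(1)[OF C'] by blast
  have Spsi: "simple_system \<Psi> (simple_of \<Psi> C')" "simple_of \<Psi> C' \<subseteq> pos_sys \<Psi> C'"
    using simple_of_props[OF rsP C'] by auto
  have Sphi: "simple_of \<Phi> D \<subseteq> pos_sys \<Phi> D" using simple_of_props[OF rs D] by auto
  have posx: "inner x \<alpha> > 0" if aP: "\<alpha> \<in> \<Psi>" and ya: "inner y \<alpha> > 0" for \<alpha>
  proof -
    have "\<forall>z\<in>C'. inner z \<alpha> \<noteq> 0" using chamber_avoid[OF C' aP] by blast
    from sign_const[OF chamber_basic(2)[OF C'] this] have "\<forall>z\<in>C'. inner z \<alpha> > 0"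
      using ya yC by auto
    then have "\<alpha> \<in> pos_sys \<Psi> C'" using aP unfolding pos_sys_def by auto
    from pos_coeff[OF Spsi yC this] obtain c where
      c: "\<alpha> = (\<Sum>s\<in>simple_of \<Psi> C'. c s *\<^sub>R s)" "\<forall>s\<in>simple_of \<Psi> C'. c s \<ge> 0" by blast
    have "inner x \<alpha> = (\<Sum>s\<in>simple_of \<Psi> C'. c s * inner x s)" using c(1) by (simp add: inner_sum_right)
    also have "\<dots> \<ge> 0"
    proof (rule sum_nonneg)
      fix s assume "s \<in> simple_of \<Psi> C'"
      then have "c s \<ge> 0" "inner x s > 0" using c(2) SS Sphi xD unfolding pos_sys_def by auto
      then show "c s * inner x s \<ge> 0" by simp
    qed
    finally have "inner x \<alpha> \<ge> 0" .
    moreover have "inner x \<alpha> \<noteq> 0" using chamber_avoid[OF D _ xD] aP PsiPhi by blast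
    ultimately show ?thesis by simp
  qed
  have seg: "closed_segment y x \<subseteq> UX \<Psi>"
  proof
    fix z assume "z \<in> closed_segment y x"
    then obtain u where u: "0 \<le> u" "u \<le> 1" "z = (1 - u) *\<^sub>R y + u *\<^sub>R x"
      unfolding closed_segment_def by blast
    have "inner z \<alpha> \<noteq> 0" if aP: "\<alpha> \<in> \<Psi>" for \<alpha>
    proof -
      have iz: "inner z \<alpha> = (1 - u) * inner y \<alpha> + u * inner x \<alpha>" using u(3) by (simp add: inner_add_left)
      have "inner y \<alpha> \<noteq> 0" using chamber_avoid[OF C' aP yC] .
      then show ?thesis
      proof (cases "inner y \<alpha> > 0")
        case True
        then show ?thesis using iz posx[OF aP True] conv_pos[OF True _ u(1,2)] by force
      next
        case False
        then have ny: "inner y (- \<alpha>) > 0" using \<open>inner y \<alpha> \<noteq> 0\<close> by simp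
        have naP: "- \<alpha> \<in> \<Psi>" using rs_neg[OF rsP aP] .
        have "inner x (- \<alpha>) > 0" using posx[OF naP ny] .
        then have "(1 - u) * inner y (- \<alpha>) + u * inner x (- \<alpha>) > 0" using conv_pos[OF ny _ u(1,2)] by blast
        then show ?thesis using iz by simp
      qed
    qed
    then show "z \<in> UX \<Psi>" unfolding hyp_def by auto
  qed
  have "closed_segment y x \<subseteq> connected_component_set (UX \<Psi>) y"
    by (rule connected_component_maximal[OF _ _ seg]) (auto simp: connected_segment)
  then show "x \<in> C'" using chamber_cc[OF C' yC] by auto
qed


lemma fin_lin:
  fixes a b :: real
  assumes "a \<noteq> 0 \<or> b \<noteq> 0"
  shows "finite {t. a + t * b = 0}"
proof (cases "b = 0")
  case True then show ?thesis using assms by simp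
next
  case False
  then have "{t. a + t * b = 0} \<subseteq> {- a / b}" by (auto simp: field_simps)
  then show ?thesis using finite_subset by blast
qed

lemma hyp_subspace:
  assumes "x \<in> hyp \<alpha>" "y \<in> hyp \<alpha>" shows "x + t *\<^sub>R y \<in> hyp \<alpha>"
  using assms unfolding hyp_def by (simp add: inner_add_left)

lemma avoid_point:
  fixes \<alpha> :: "'a::euclidean_space"
  assumes "finite B" "\<forall>\<beta>\<in>B. \<exists>w\<in>hyp \<alpha>. inner w \<beta> \<noteq> 0" "u \<in> hyp \<alpha>" "\<epsilon> > 0"
  shows "\<exists>z\<in>hyp \<alpha>. dist u z < \<epsilon> \<and> (\<forall>\<beta>\<in>B. inner z \<beta> \<noteq> 0)"
  using assms
proof (induction B rule: finite_induct)
  case empty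
  then show ?case by (intro bexI[of _ u]) auto
next
  case (insert \<gamma> B)
  then obtain z where z: "z \<in> hyp \<alpha>" "dist u z < \<epsilon>" "\<forall>\<beta>\<in>B. inner z \<beta> \<noteq> 0" by auto
  obtain w where w: "w \<in> hyp \<alpha>" "inner w \<gamma> \<noteq> 0" using insert.prems by auto
  define \<delta> where "\<delta> = \<epsilon> - dist u z"
  have dpos: "\<delta> > 0" using z(2) unfolding \<delta>_def by simp
  define M where "M = \<delta> / (norm w + 1)"
  have Mpos: "M > 0" unfolding M_def using dpos by (simp add: add_nonneg_pos)
  define Bad where "Bad = (\<Union>\<beta>\<in>insert \<gamma> B. {t. inner z \<beta> + t * inner w \<beta> = 0})"
  have "finite Bad" unfolding Bad_def
  proof (intro finite_UN_I insert.hyps(1)[THEN finite_insert[THEN iffD2]])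
    fix \<beta> assume "\<beta> \<in> insert \<gamma> B"
    then have "inner z \<beta> \<noteq> 0 \<or> inner w \<beta> \<noteq> 0" using z(3) w(2) by auto
    then show "finite {t. inner z \<beta> + t * inner w \<beta> = 0}" by (rule fin_lin)
  qed
  then have "infinite ({0<..<M} - Bad)" using Diff_infinite_finite infinite_Ioo Mpos by blast
  then obtain t where t: "t \<in> {0<..<M}" "t \<notin> Bad" by (metis Diff_iff finite.emptyI infinite_imp_nonempty ex_in_conv)
  define z' where "z' = z + t *\<^sub>R w"
  have "z' \<in> hyp \<alpha>" unfolding z'_def by (rule hyp_subspace[OF z(1) w(1)])
  moreover have "dist u z' < \<epsilon>"
  proof -
    have "dist u z' \<le> dist u z + dist z z'" by (rule dist_triangle)
    also have "dist z z' = t * norm w" unfolding z'_def dist_norm using t(1) by simp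
    also have "t * norm w \<le> M * norm w" using t(1) by (simp add: mult_right_mono)
    also have "M * norm w < \<delta>"
    proof -
      have "M * norm w = \<delta> * (norm w / (norm w + 1))" unfolding M_def by simp
      also have "\<dots> < \<delta> * 1"
      proof (intro mult_strict_left_mono dpos)
        have "norm w < norm w + 1" by simp
        then show "norm w / (norm w + 1) < 1" by (subst divide_less_eq_1_pos) (auto simp: add_nonneg_pos)
      qed
      finally show ?thesis by simp
    qed
    finally show ?thesis unfolding \<delta>_def by simp
  qed
  moreover have "\<forall>\<beta>\<in>insert \<gamma> B. inner z' \<beta> \<noteq> 0"
    using t(2) unfolding Bad_def z'_def by (auto simp: inner_add_left)
  ultimately show ?case by blast
qed

lemma closed_hyp: "closed (hyp \<alpha>)"
  unfolding hyp_def by (intro closed_Collect_eq) (auto intro: continuous_intros)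

lemma open_UX: "finite X \<Longrightarrow> open (UX X)"
  by (intro open_Diff open_UNIV closed_UN) (auto simp: closed_hyp)


lemma not_parallel:
  assumes rs: "root_system \<Phi>" and sub: "root_subsystem \<Phi> \<Psi>"
    and aP: "\<alpha> \<in> \<Phi>" and naP: "\<alpha> \<notin> \<Psi>" and bP: "\<beta> \<in> \<Psi>"
  shows "\<exists>w\<in>hyp \<alpha>. inner w \<beta> \<noteq> 0"
proof (rule ccontr)
  assume "\<not> ?thesis"
  then have H: "\<And>w. inner w \<alpha> = 0 \<Longrightarrow> inner w \<beta> = 0" unfolding hyp_def by auto
  have anz: "\<alpha> \<noteq> 0" using rs_nz[OF rs aP] .
  define k where "k = inner \<beta> \<alpha> / inner \<alpha> \<alpha>"
  define w where "w = \<beta> - k *\<^sub>R \<alpha>"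
  have wa: "inner w \<alpha> = 0" unfolding w_def k_def using anz by (simp add: inner_diff_left)
  then have wb: "inner w \<beta> = 0" by (rule H)
  have "inner w w = inner w \<beta> - k * inner w \<alpha>" unfolding w_def by (simp add: inner_diff_right)
  then have "w = 0" using wa wb by simp
  then have bk: "\<beta> = k *\<^sub>R \<alpha>" unfolding w_def by simp
  have PsiPhi: "\<Psi> \<subseteq> \<Phi>" using sub unfolding root_subsystem_def by blast
  have "k = 1 \<or> k = -1" using rs_reduced[OF rs aP] bk bP PsiPhi by auto
  then show False
  proof
    assume "k = 1" then show False using bk bP naP by simp
  next
    assume "k = -1"
    then have "\<alpha> = - \<beta>" using bk by simp
    then show False using rs_neg[OF sub_rs[OF rs sub] bP] naP by simp
  qed
qed

lemma wall_same:
  assumes rs: "root_system \<Phi>" and sub: "root_subsystem \<Phi> \<Psi>"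
    and C1: "C1 \<in> chambers \<Phi>" and C2: "C2 \<in> chambers \<Phi>"
    and aP: "\<alpha> \<in> \<Phi>" and naP: "\<alpha> \<notin> \<Psi>" and ct: "connected_through C1 C2 \<alpha>"
  shows "subch \<Psi> C1 = subch \<Psi> C2"
proof -
  have PsiPhi: "\<Psi> \<subseteq> \<Phi>" using sub unfolding root_subsystem_def by blast
  have finPsi: "finite \<Psi>" using sub_rs[OF rs sub] unfolding root_system_def by blast
  obtain U where U: "openin (top_of_set (hyp \<alpha>)) U" "U \<noteq> {}"
    "U \<subseteq> closure C1 \<inter> closure C2 \<inter> hyp \<alpha>" using ct unfolding connected_through_def by blast
  obtain u where uU: "u \<in> U" using U(2) by blast
  obtain \<epsilon> where eps: "\<epsilon> > 0" "\<forall>x'\<in>hyp \<alpha>. dist x' u < \<epsilon> \<longrightarrow> x' \<in> U"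
    using U(1) uU unfolding openin_euclidean_subtopology_iff by blast
  have uh: "u \<in> hyp \<alpha>" using uU U(3) by blast
  obtain z where z: "z \<in> hyp \<alpha>" "dist u z < \<epsilon>" "\<forall>\<beta>\<in>\<Psi>. inner z \<beta> \<noteq> 0"
    using avoid_point[OF finPsi _ uh eps(1)] not_parallel[OF rs sub aP naP] by blast
  have zU: "z \<in> U" using eps(2) z(1,2) by (simp add: dist_commute)
  have zUX: "z \<in> UX \<Psi>" using z(3) unfolding hyp_def by auto
  obtain r where r: "r > 0" "ball z r \<subseteq> UX \<Psi>"
    using open_UX[OF finPsi] zUX open_contains_ball by blast
  obtain a where a: "a \<in> C1" "dist a z < r" using zU U(3) closure_approachable r(1) by blast
  obtain b where b: "b \<in> C2" "dist b z < r" using zU U(3) closure_approachable r(1) by blast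
  have aB: "a \<in> ball z r" and bB: "b \<in> ball z r" using a b by (auto simp: dist_commute)
  have "ball z r \<subseteq> connected_component_set (UX \<Psi>) a"
    by (rule connected_component_maximal[OF aB connected_ball r(2)])
  then have ab: "connected_component_set (UX \<Psi>) a = connected_component_set (UX \<Psi>) b"
    using bB connected_component_eq by blast
  have s1: "subch \<Psi> C1 = connected_component_set (UX \<Psi>) a"
    using subch_props[OF PsiPhi C1] chamber_cc a(1) by blast
  have s2: "subch \<Psi> C2 = connected_component_set (UX \<Psi>) b"
    using subch_props[OF PsiPhi C2] chamber_cc b(1) by blast
  show ?thesis using s1 s2 ab by simp
qed


lemma same_side_lemma:
  assumes "connected C" "\<forall>x\<in>C. inner x \<beta> \<noteq> 0" "A \<subseteq> C" "B \<subseteq> C"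
  shows "same_side \<beta> A B"
  using sign_const[OF assms(1,2)] assms(3,4) unfolding same_side_def by blast

lemma chain_same:
  assumes rs: "root_system \<Phi>" and sub: "root_subsystem \<Phi> \<Psi>" and g: "gallery \<Phi> \<Gamma>"
    and k: "k0 \<le> k1" "k1 \<le> glen \<Gamma>" and nP: "\<forall>j. k0 < j \<and> j \<le> k1 \<longrightarrow> groot \<Gamma> j \<notin> \<Psi>"
  shows "subch \<Psi> (gch \<Gamma> k0) = subch \<Psi> (gch \<Gamma> k1)"
  using k nP
proof (induction k1 rule: dec_induct)
  case base then show ?case by simp
next
  case (step k1)
  have IH: "subch \<Psi> (gch \<Gamma> k0) = subch \<Psi> (gch \<Gamma> k1)" using step by auto
  have j: "Suc k1 \<in> {1..glen \<Gamma>}" using step by auto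
  have "groot \<Gamma> (Suc k1) \<in> \<Phi> \<and> connected_through (gch \<Gamma> (Suc k1 - 1)) (gch \<Gamma> (Suc k1)) (groot \<Gamma> (Suc k1))"
    using g j unfolding gallery_def by blast
  then have "groot \<Gamma> (Suc k1) \<in> \<Phi>" "connected_through (gch \<Gamma> k1) (gch \<Gamma> (Suc k1)) (groot \<Gamma> (Suc k1))"
    by simp_all
  moreover have "gch \<Gamma> k1 \<in> chambers \<Phi>" "gch \<Gamma> (Suc k1) \<in> chambers \<Phi>"
    using g step.prems(1) unfolding gallery_def by auto
  moreover have "groot \<Gamma> (Suc k1) \<notin> \<Psi>" using step by auto
  ultimately show ?case using IH wall_same[OF rs sub] by metis
qed

lemma mono_enum:
  fixes L :: "nat list" and p :: "nat \<Rightarrow> nat"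
  assumes srt: "sorted_wrt (<) L" and sm: "strict_mono_on {1..length L} p"
    and img: "p ` {1..length L} = set L"
  shows "i \<in> {1..length L} \<Longrightarrow> p i = L ! (i - 1)"
proof (induction i rule: less_induct)
  case (less i)
  have lt: "L ! a < L ! b" if "a < b" "b < length L" for a b
    using sorted_wrt_nth_less[OF srt that] .
  have pin: "p i \<in> set L" using img less.prems by blast
  then obtain j where j: "j < length L" "p i = L ! j" by (metis in_set_conv_nth)
  have Li: "L ! (i - 1) \<in> set L" using less.prems by auto
  then obtain k where k: "k \<in> {1..length L}" "L ! (i - 1) = p k" using img by (metis imageE)
  have smD: "p x < p y" if "x \<in> {1..length L}" "y \<in> {1..length L}" "x < y" for x y
    using sm that unfolding strict_mono_on_def by blast
  show ?case
  proof (cases "j < i - 1")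
    case True
    have "p (j + 1) = L ! j" using less.IH[of "j+1"] True less.prems j(1) by auto
    then have "p (j+1) = p i" using j by simp
    moreover have "j + 1 < i" using True by simp
    ultimately show ?thesis using smD[of "j+1" i] less.prems j(1) by auto
  next
    case False
    show ?thesis
    proof (cases "k < i")
      case True
      have "p k = L ! (k - 1)" using less.IH[OF True k(1)] .
      then have "L ! (i - 1) = L ! (k - 1)" using k by simp
      moreover have "k - 1 < i - 1" using True k(1) by auto
      moreover have "i - 1 < length L" using less.prems by auto
      ultimately show ?thesis using lt[of "k - 1" "i - 1"] by simp
    next
      case False2: False
      show ?thesis
      proof (cases "k = i")
        case True then show ?thesis using k by simp
      next
        case False
        then have "i < k" using False2 by simp
        then have "p i < p k" using smD less.prems k(1) by blast
        moreover have "L ! (i - 1) \<le> L ! j"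
          using \<open>\<not> j < i - 1\<close> lt[of "i - 1" j] j(1) by (cases "i - 1 = j") auto
        ultimately show ?thesis using j k by simp
      qed
    qed
  qed
qed


theorem theorem3:
  fixes \<Phi> \<Psi> :: "'a::euclidean_space set"
    and \<Gamma> \<Delta> :: "'a gallery" and p :: "nat \<Rightarrow> nat"
  assumes "root_system \<Phi>"
    and "root_subsystem \<Phi> \<Psi>" and "saturated \<Phi> \<Psi>"
    and "gallery \<Phi> \<Gamma>"
    and "gallery \<Phi> \<Delta>"
    and "gallery_lifts \<Phi> \<Psi> \<Delta> (restrict_gal \<Psi> \<Gamma>)"
    and "strict_mono_on {1..glen (restrict_gal \<Psi> \<Gamma>)} p"
    and "p ` {1..glen (restrict_gal \<Psi> \<Gamma>)} = I_idx \<Psi> \<Gamma>"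
  shows "p_pair \<Delta> \<Gamma> p \<and>
         (\<forall>i\<in>{1..glen \<Delta>}. pair_sign \<Delta> \<Gamma> p i = 1) \<and>
         (\<forall>i\<in>{1..glen \<Delta>}. pair_cosign \<Delta> \<Gamma> p i = 1)"
proof -
  note rs = assms(1) and sub = assms(2) and gG = assms(4) and gD = assms(5)
  define L where "L = idx_list \<Psi> \<Gamma>"
  define m where "m = length L"
  define n where "n = glen \<Gamma>"
  have PsiPhi: "\<Psi> \<subseteq> \<Phi>" using sub unfolding root_subsystem_def by blast
  have glenG': "glen (restrict_gal \<Psi> \<Gamma>) = m"
    unfolding glen_def restrict_gal_def m_def L_def by simp
  have setL: "set L = I_idx \<Psi> \<Gamma>"
    unfolding L_def idx_list_def I_idx_def by auto
  have srt: "sorted_wrt (<) L" unfolding L_def idx_list_def by (intro sorted_wrt_filter sorted_wrt_upt)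
  have pL: "p i = L ! (i - 1)" if "i \<in> {1..m}" for i
    using mono_enum[OF srt, of p i] assms(7,8) glenG' setL that unfolding m_def by simp
  have Lk: "L ! k \<in> {1..n} \<and> groot \<Gamma> (L ! k) \<in> \<Psi>" if "k < m" for k
  proof -
    have "L ! k \<in> set L" using that m_def by simp
    then show ?thesis using setL unfolding I_idx_def n_def by auto
  qed
  have lt: "L ! a < L ! b" if "a < b" "b < m" for a b
    using sorted_wrt_nth_less[OF srt that(1)] that(2) m_def by simp
  have gchG': "gch (restrict_gal \<Psi> \<Gamma>) j = subch \<Psi> (gch \<Gamma> ((0 # L) ! j))" if "j \<le> m" for j
  proof -
    have "j < length (0 # L)" using that m_def by simp
    then show ?thesis unfolding gch_def restrict_gal_def L_def[symmetric] by (cases j) simp_all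
  qed
  have gl: "walls \<Delta> = walls (restrict_gal \<Psi> \<Gamma>)"
    "\<forall>j\<le>glen \<Delta>. lifts \<Phi> \<Psi> (gch \<Delta> j) (gch (restrict_gal \<Psi> \<Gamma>) j)"
    using assms(6) unfolding gallery_lifts_def by auto
  have wl: "map hyp (snd \<Delta>) = map hyp (map (groot \<Gamma>) L)"
    using gl(1) unfolding walls_def restrict_gal_def L_def by simp
  have glenD: "glen \<Delta> = m" unfolding glen_def m_def using arg_cong[OF wl, of length] by simp
  have hypD: "hyp (groot \<Delta> i) = hyp (groot \<Gamma> (L ! (i - 1)))" if "i \<in> {1..m}" for i
  proof -
    have "i - 1 < m" using that by auto
    then have "map hyp (snd \<Delta>) ! (i - 1) = map hyp (map (groot \<Gamma>) L) ! (i - 1)" using wl by simp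
    then show ?thesis unfolding groot_def using \<open>i - 1 < m\<close> glenD unfolding glen_def m_def
      by (simp add: groot_def)
  qed
  have chG: "gch \<Gamma> j \<in> chambers \<Phi>" if "j \<le> n" for j
    using gG that unfolding gallery_def n_def by blast
  have avoid: "\<forall>x\<in>subch \<Psi> (gch \<Gamma> j). inner x (groot \<Delta> i) \<noteq> 0"
    if "j \<le> n" "i \<in> {1..m}" for j i
  proof
    fix x assume x: "x \<in> subch \<Psi> (gch \<Gamma> j)"
    have "subch \<Psi> (gch \<Gamma> j) \<in> chambers \<Psi>" using subch_props[OF PsiPhi chG[OF that(1)]] by blast
    moreover have "groot \<Gamma> (L ! (i - 1)) \<in> \<Psi>" using Lk[of "i - 1"] that(2) by auto
    ultimately have "x \<notin> hyp (groot \<Gamma> (L ! (i - 1)))" using chamber_basic(3) x by blast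
    then have "x \<notin> hyp (groot \<Delta> i)" using hypD[OF that(2)] by simp
    then show "inner x (groot \<Delta> i) \<noteq> 0" unfolding hyp_def by simp
  qed
  have conn: "connected (subch \<Psi> (gch \<Gamma> j))" if "j \<le> n" for j
    using subch_props[OF PsiPhi chG[OF that]] chamber_basic(2) by blast
  have inc: "gch \<Gamma> j \<subseteq> subch \<Psi> (gch \<Gamma> j)" if "j \<le> n" for j
    using subch_props[OF PsiPhi chG[OF that]] by blast
  have liftD: "gch \<Delta> j \<subseteq> subch \<Psi> (gch \<Gamma> ((0 # L) ! j))" if "j \<le> m" for j
  proof -
    have "lifts \<Phi> \<Psi> (gch \<Delta> j) (subch \<Psi> (gch \<Gamma> ((0 # L) ! j)))"
      using gl(2) glenD gchG'[OF that] that by metis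
    then show ?thesis unfolding lifts_def using lift_sub[OF rs sub] by blast
  qed
  have ppair: "p_pair \<Delta> \<Gamma> p"
    unfolding p_pair_def
  proof (intro conjI ballI)
    show "p ` {1..glen \<Delta>} \<subseteq> {1..glen \<Gamma>}" using assms(8) glenG' glenD unfolding I_idx_def by auto
    show "strict_mono_on {1..glen \<Delta>} p" using assms(7) glenG' glenD by simp
    fix i assume "i \<in> {1..glen \<Delta>}"
    then show "hyp (groot \<Gamma> (p i)) = hyp (groot \<Delta> i)" using hypD pL glenD by simp
  qed
  have sign: "pair_sign \<Delta> \<Gamma> p i = 1" if i: "i \<in> {1..m}" for i
  proof -
    define k where "k = L ! (i - 1)"
    have kn: "k \<le> n" using Lk[of "i - 1"] i unfolding k_def by auto
    have "(0 # L) ! i = k" using i unfolding k_def by (cases i) auto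
    then have "gch \<Delta> i \<subseteq> subch \<Psi> (gch \<Gamma> k)" using liftD[of i] i by auto
    moreover have "gch \<Gamma> (p i) \<subseteq> subch \<Psi> (gch \<Gamma> k)" using pL[OF i] inc[OF kn] k_def by simp
    ultimately have "same_side (groot \<Delta> i) (gch \<Delta> i) (gch \<Gamma> (p i))"
      using same_side_lemma[OF conn[OF kn] avoid[OF kn i]] by blast
    then show ?thesis unfolding pair_sign_def by simp
  qed
  have cosign: "pair_cosign \<Delta> \<Gamma> p i = 1" if i: "i \<in> {1..m}" for i
  proof -
    define k where "k = L ! (i - 1)"
    define k0 where "k0 = (0 # L) ! (i - 1)"
    have kn: "k \<le> n" and k1: "k \<ge> 1" using Lk[of "i - 1"] i unfolding k_def by auto
    have k0k: "k0 < k"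
    proof (cases "i = 1")
      case True then show ?thesis using k1 unfolding k0_def by simp
    next
      case False
      then have "k0 = L ! (i - 2)" unfolding k0_def using i by (cases i) (auto simp: nth_Cons')
      then show ?thesis using lt[of "i - 2" "i - 1"] False i unfolding k_def by auto
    qed
    have nP: "\<forall>j. k0 < j \<and> j \<le> k - 1 \<longrightarrow> groot \<Gamma> j \<notin> \<Psi>"
    proof (intro allI impI)
      fix j assume j: "k0 < j \<and> j \<le> k - 1"
      show "groot \<Gamma> j \<notin> \<Psi>"
      proof
        assume gj: "groot \<Gamma> j \<in> \<Psi>"
        have "j \<in> {1..n}" using j k0k kn by auto
        then have "j \<in> set L" using setL gj unfolding I_idx_def n_def by auto
        then obtain q where q: "q < m" "j = L ! q" unfolding m_def by (metis in_set_conv_nth)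
        show False
        proof (cases "q < i - 1")
          case True
          then have "i \<noteq> 1" by auto
          then have "k0 = L ! (i - 2)" unfolding k0_def using i by (cases i) (auto simp: nth_Cons')
          moreover have "L ! q \<le> L ! (i - 2)"
          proof (cases "q = i - 2")
            case False
            then have "q < i - 2" "i - 2 < m" using \<open>q < i - 1\<close> i by auto
            then show ?thesis using lt[of q "i - 2"] by simp
          qed simp
          ultimately show False using j q by simp
        next
          case False
          then have "L ! (i - 1) \<le> L ! q" using lt[of "i - 1" q] q(1) by (cases "q = i - 1") auto
          then show False using j q k_def k1 by linarith
        qed
      qed
    qed
    have eq: "subch \<Psi> (gch \<Gamma> k0) = subch \<Psi> (gch \<Gamma> (k - 1))"
      by (rule chain_same[OF rs sub gG]) (use k0k kn nP in \<open>auto simp: n_def\<close>)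
    have "i - 1 \<le> m" using i by auto
    then have "gch \<Delta> (i - 1) \<subseteq> subch \<Psi> (gch \<Gamma> (k - 1))" using liftD[of "i - 1"] eq k0_def by simp
    moreover have "gch \<Gamma> (p i - 1) \<subseteq> subch \<Psi> (gch \<Gamma> (k - 1))" using pL[OF i] inc[of "k - 1"] kn k_def by simp
    moreover have "k - 1 \<le> n" using kn by simp
    ultimately have "same_side (groot \<Delta> i) (gch \<Delta> (i - 1)) (gch \<Gamma> (p i - 1))"
      using same_side_lemma[OF conn avoid[OF _ i]] by blast
    then show ?thesis unfolding pair_cosign_def by simp
  qed
  show ?thesis using ppair sign cosign glenD by simp
qed

end
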